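(* Let $G$ be an ordered graph with $|V(G)|\le n$, let $h\ge 1$ be a real number, and let $e\in E(G)$ satisfy $\mathrm{h}_G(e)\ge 21h\log n$. Then there is a subgraph $H\subseteq G$ with average degree $\overline{d}(H)\ge h$ such that for each $f\in E(H)$ there is an increasing trail $T$ in $G$ with the following properties: (1) $T$ starts with $e$ and ends with $f$; (2) $T$ has length at most $2+\log n$; (3) $\mathrm{h}_G(g)\ge \mathrm{h}_G(e)-7h(\log n+2)$ for every edge $g\in E(T)$.
   Context: An ordered graph is a finite simple graph $G$ equipped with a total order $\le_G$ on $E(G)$ and a total order $\le^V_G$ on $V(G)$. Let $\mathbb N=\{1,2,\dots\}$. Define $\preceq_{\mathrm{lex}}$ on $\mathbb N\times V(G)$ by $(i,v)\preceq_{\mathrm{lex}}(i',v')$ iff $i<i'$, or $i=i'$ and $v\le^V_G v'$. The height table $\mathrm{HT}(G)$ is a partially filled array indexed by $\mathbb N\times V(G)$, built by going through all $(i,v)$ in $\preceq_{\mathrm{lex}}$-increasing order and setting the entry at $(i,v)$ to be the $\le_G$-largest edge containing $v$ not yet entered into the table (blank if none remain). Every edge is entered exactly once; $\mathrm{h}_G(e)$ denotes the row of $\mathrm{HT}(G)$ containing $e$. An increasing trail is a walk with a specified direction that does not repeat edges (vertices may repeat) and whose consecutive edges are $\le_G$-increasing; its length is its number of edges. $\overline{d}(H)=2|E(H)|/|V(H)|$. Logarithms are base 2. *)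

theory Defs
  imports Complex_Main
begin

definition simple_graph :: "'a set \<Rightarrow> 'a set set \<Rightarrow> bool" where
  "simple_graph V E \<longleftrightarrow> finite V \<and>
     (\<forall>e\<in>E. \<exists>u v. u \<in> V \<and> v \<in> V \<and> u \<noteq> v \<and> e = {u, v})"

definition ordered_graph ::
  "'a set \<Rightarrow> 'a set set \<Rightarrow> ('a set \<times> 'a set) set \<Rightarrow> ('a \<times> 'a) set \<Rightarrow> bool" where
  "ordered_graph V E leE leV \<longleftrightarrow> simple_graph V E \<and>
     linear_order_on E leE \<and> linear_order_on V leV"

definition vlist :: "'a set \<Rightarrow> ('a \<times> 'a) set \<Rightarrow> 'a list" where
  "vlist V leV = (THE vs. set vs = V \<and> sorted_wrt (\<lambda>u w. u \<noteq> w \<and> (u, w) \<in> leV) vs)"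

text \<open>Process one cell (i,v) of the height table: remove from the set R of not yet
  entered edges the leE-largest edge containing v (if any).\<close>
definition ht_cell :: "('a set \<times> 'a set) set \<Rightarrow> 'a \<Rightarrow> 'a set set \<Rightarrow> 'a set set" where
  "ht_cell leE v R =
     (if \<exists>f\<in>R. v \<in> f
      then R - {THE f. f \<in> R \<and> v \<in> f \<and> (\<forall>g\<in>R. v \<in> g \<longrightarrow> (g, f) \<in> leE)}
      else R)"

fun ht_row :: "('a set \<times> 'a set) set \<Rightarrow> 'a list \<Rightarrow> 'a set set \<Rightarrow> 'a set set" where
  "ht_row leE [] R = R"
| "ht_row leE (v # vs) R = ht_row leE vs (ht_cell leE v R)"

fun ht_remaining ::
  "'a set \<Rightarrow> 'a set set \<Rightarrow> ('a set \<times> 'a set) set \<Rightarrow> ('a \<times> 'a) set \<Rightarrow> nat \<Rightarrow> 'a set set" where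
  "ht_remaining V E leE leV 0 = E"
| "ht_remaining V E leE leV (Suc i) = ht_row leE (vlist V leV) (ht_remaining V E leE leV i)"

text \<open>h_G(e): the row (rows numbered 1,2,...) of HT(G) containing e.\<close>
definition height ::
  "'a set \<Rightarrow> 'a set set \<Rightarrow> ('a set \<times> 'a set) set \<Rightarrow> ('a \<times> 'a) set \<Rightarrow> 'a set \<Rightarrow> nat" where
  "height V E leE leV e = (LEAST i. e \<notin> ht_remaining V E leE leV i)"

definition walk_edges :: "'a list \<Rightarrow> 'a set list" where
  "walk_edges ws = map (\<lambda>i. {ws ! i, ws ! Suc i}) [0..<length ws - 1]"

definition increasing_trail ::
  "'a set set \<Rightarrow> ('a set \<times> 'a set) set \<Rightarrow> 'a list \<Rightarrow> bool" where
  "increasing_trail E leE ws \<longleftrightarrow> length ws \<ge> 2 \<and> set (walk_edges ws) \<subseteq> E \<and>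
     distinct (walk_edges ws) \<and>
     (\<forall>i. Suc i < length (walk_edges ws) \<longrightarrow>
        (walk_edges ws ! i, walk_edges ws ! Suc i) \<in> leE)"

definition trail_length :: "'a list \<Rightarrow> nat" where
  "trail_length ws = length (walk_edges ws)"

definition subgraph :: "'a set \<Rightarrow> 'a set set \<Rightarrow> 'a set \<Rightarrow> 'a set set \<Rightarrow> bool" where
  "subgraph VH EH V E \<longleftrightarrow> VH \<subseteq> V \<and> EH \<subseteq> E \<and> (\<forall>f\<in>EH. f \<subseteq> VH)"

definition avg_degree :: "'a set \<Rightarrow> 'a set set \<Rightarrow> real" where
  "avg_degree VH EH = 2 * real (card EH) / real (card VH)"

end

theory Submission imports Defs begin


lemma lo_facts:
  assumes "linear_order_on X r"
  shows "\<forall>x\<in>X. (x,x)\<in>r" "trans r" "antisym r"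
    "\<forall>x\<in>X. \<forall>y\<in>X. (x,y)\<in>r \<or> (y,x)\<in>r"
proof -
  have p: "refl_on X r" "trans r" "antisym r" "total_on X r"
    using assms unfolding linear_order_on_def partial_order_on_def preorder_on_def by simp_all
  show "\<forall>x\<in>X. (x,x)\<in>r" using p(1) unfolding refl_on_def by simp
  show "trans r" "antisym r" using p by simp_all
  show "\<forall>x\<in>X. \<forall>y\<in>X. (x,y)\<in>r \<or> (y,x)\<in>r"
  proof (intro ballI)
    fix x y assume "x \<in> X" "y \<in> X"
    then show "(x,y)\<in>r \<or> (y,x)\<in>r"
      using p(1,4) unfolding refl_on_def total_on_def by (cases "x = y") simp_all
  qed
qed

lemma finite_max_rel:
  assumes "finite S" "S \<noteq> {}" "S \<subseteq> X" "\<forall>x\<in>X. (x,x)\<in>r" "trans r"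
    "\<forall>x\<in>X. \<forall>y\<in>X. (x,y)\<in>r \<or> (y,x)\<in>r"
  shows "\<exists>m\<in>S. \<forall>x\<in>S. (x,m)\<in>r"
  using assms(1,2,3)
proof (induction S rule: finite_ne_induct)
  case (singleton x)
  then show ?case using assms(4) by blast
next
  case (insert x F)
  then obtain m where m: "m \<in> F" "\<forall>y\<in>F. (y,m)\<in>r" by blast
  have xX: "x \<in> X" "m \<in> X" using insert.prems m(1) by blast+
  show ?case
  proof (cases "(m,x) \<in> r")
    case True
    have "\<forall>y\<in>insert x F. (y,x)\<in>r"
    proof
      fix y assume y: "y \<in> insert x F"
      show "(y,x)\<in>r"
      proof (cases "y = x")
        case True then show ?thesis using assms(4) xX by blast
      next
        case False
        then have "(y,m) \<in> r" using y m by blast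
        then show ?thesis using \<open>(m,x) \<in> r\<close> assms(5) by (meson transD)
      qed
    qed
    then show ?thesis by blast
  next
    case False
    then have xm: "(x,m) \<in> r" using assms(6) xX by blast
    have "\<forall>y\<in>insert x F. (y,m)\<in>r" using xm m(2) by blast
    then show ?thesis using m(1) by blast
  qed
qed


lemma walk_edges_len: "length (walk_edges ws) = length ws - 1"
  unfolding walk_edges_def by simp

lemma walk_edges_nth: "i < length ws - 1 \<Longrightarrow> walk_edges ws ! i = {ws ! i, ws ! Suc i}"
  unfolding walk_edges_def by simp

lemma walk_edges_snoc:
  assumes "ws \<noteq> []"
  shows "walk_edges (ws @ [y]) = walk_edges ws @ [{last ws, y}]"
proof (rule nth_equalityI)
  show "length (walk_edges (ws @ [y])) = length (walk_edges ws @ [{last ws, y}])"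
    using assms by (simp add: walk_edges_len)
  fix i assume "i < length (walk_edges (ws @ [y]))"
  then have i: "i < length ws" by (simp add: walk_edges_len)
  show "walk_edges (ws @ [y]) ! i = (walk_edges ws @ [{last ws, y}]) ! i"
  proof (cases "i < length ws - 1")
    case True
    have l: "walk_edges (ws @ [y]) ! i = {(ws @ [y]) ! i, (ws @ [y]) ! Suc i}"
      using i by (intro walk_edges_nth) simp
    have a: "(ws @ [y]) ! i = ws ! i" "(ws @ [y]) ! Suc i = ws ! Suc i"
    proof -
      have "Suc i < length ws" "i < length ws" using True by linarith+
      then show "(ws @ [y]) ! i = ws ! i" "(ws @ [y]) ! Suc i = ws ! Suc i"
        by (simp_all add: nth_append)
    qed
    have c: "(walk_edges ws @ [{last ws, y}]) ! i = walk_edges ws ! i"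
      using True by (simp add: nth_append walk_edges_len)
    show ?thesis using l a c walk_edges_nth[OF True] by simp
  next
    case False
    then have ii: "i = length ws - 1" using i by simp
    have l: "walk_edges (ws @ [y]) ! i = {(ws @ [y]) ! i, (ws @ [y]) ! Suc i}"
      using i by (intro walk_edges_nth) simp
    have a: "(ws @ [y]) ! i = last ws" using ii assms by (simp add: nth_append last_conv_nth)
    have b: "(ws @ [y]) ! Suc i = y" using ii assms by (simp add: nth_append)
    have c: "(walk_edges ws @ [{last ws, y}]) ! i = {last ws, y}"
      using ii by (simp add: nth_append walk_edges_len)
    show ?thesis using l a b c by simp
  qed
qed


lemma sorted_rel_unique:
  assumes "antisym r"
  shows "sorted_wrt (\<lambda>u w. u \<noteq> w \<and> (u, w) \<in> r) xs \<Longrightarrow> sorted_wrt (\<lambda>u w. u \<noteq> w \<and> (u, w) \<in> r) ys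
     \<Longrightarrow> set xs = set ys \<Longrightarrow> xs = ys"
proof (induction xs arbitrary: ys)
  case Nil
  then show ?case by simp
next
  case (Cons a as)
  obtain b bs where ys: "ys = b # bs" using Cons.prems(3) by (cases ys) auto
  have sa: "\<forall>x\<in>set as. a \<noteq> x \<and> (a, x) \<in> r" "sorted_wrt (\<lambda>u w. u \<noteq> w \<and> (u, w) \<in> r) as"
    using Cons.prems(1) by simp_all
  have sb: "\<forall>x\<in>set bs. b \<noteq> x \<and> (b, x) \<in> r" "sorted_wrt (\<lambda>u w. u \<noteq> w \<and> (u, w) \<in> r) bs"
    using Cons.prems(2) ys by simp_all
  have st: "insert a (set as) = insert b (set bs)" using Cons.prems(3) ys by simp
  have ab: "a = b"
  proof (rule ccontr)
    assume ne: "a \<noteq> b"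
    have "a \<in> insert b (set bs)" using st[symmetric] by simp
    then have "a \<in> set bs" using ne by simp
    then have ba: "(b,a) \<in> r" using sb(1) by simp
    have "b \<in> insert a (set as)" using st by simp
    then have "b \<in> set as" using ne by simp
    then have ab: "(a,b) \<in> r" using sa(1) by simp
    have "a = b" by (rule antisymD[OF assms ab ba])
    then show False using ne by simp
  qed
  have "a \<notin> set as" using sa(1) by auto
  moreover have "b \<notin> set bs" using sb(1) by auto
  ultimately have "set as = set bs"
  proof -
    assume a1: "a \<notin> set as" and b1: "b \<notin> set bs"
    have "set as = insert a (set as) - {a}" using a1 by simp
    also have "\<dots> = insert b (set bs) - {b}" using st ab by simp
    also have "\<dots> = set bs" using b1 by simp
    finally show ?thesis .
  qed
  then have "as = bs" using Cons.IH[OF sa(2) sb(2)] by simp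
  then show ?case using ys ab by simp
qed

lemma sorted_rel_exists:
  assumes "finite V" "linear_order_on V r"
  shows "\<exists>xs. set xs = V \<and> sorted_wrt (\<lambda>u w. u \<noteq> w \<and> (u, w) \<in> r) xs"
  using assms(1)
proof (induction V rule: finite_remove_induct)
  case empty
  then show ?case by simp
next
  case (remove A)
  have "\<exists>m\<in>A. \<forall>x\<in>A. (x,m)\<in>r\<inverse>"
    apply (rule finite_max_rel[where X=V])
    using remove lo_facts[OF assms(2)] by auto
  then obtain m where m: "m \<in> A" "\<forall>x\<in>A. (m,x)\<in>r" by auto
  obtain xs where xs: "set xs = A - {m}" "sorted_wrt (\<lambda>u w. u \<noteq> w \<and> (u, w) \<in> r) xs"
    using remove.IH[OF m(1)] by auto
  show ?case
    apply (rule exI[of _ "m # xs"])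
    using xs m by auto
qed

lemma vlist_set:
  assumes "ordered_graph V E leE leV"
  shows "set (vlist V leV) = V"
proof -
  have fin: "finite V" and lo: "linear_order_on V leV"
    using assms unfolding ordered_graph_def simple_graph_def by auto
  let ?P = "\<lambda>vs. set vs = V \<and> sorted_wrt (\<lambda>u w. u \<noteq> w \<and> (u, w) \<in> leV) vs"
  have ex: "\<exists>vs. ?P vs" by (rule sorted_rel_exists[OF fin lo])
  have un: "\<And>xs ys. ?P xs \<Longrightarrow> ?P ys \<Longrightarrow> xs = ys"
  proof -
    fix xs ys assume "?P xs" "?P ys"
    then show "xs = ys" using sorted_rel_unique[OF lo_facts(3)[OF lo], of xs ys] by simp
  qed
  have "\<exists>!vs. ?P vs" using ex un by (rule ex_ex1I)
  then have "?P (vlist V leV)" unfolding vlist_def by (rule theI')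
  then show ?thesis by simp
qed

lemma ht_cell_sub: "ht_cell leE v R \<subseteq> R"
  unfolding ht_cell_def by auto

lemma ht_row_sub: "ht_row leE vs R \<subseteq> R"
  by (induction vs arbitrary: R) (auto, meson ht_cell_sub subsetD)

lemma ht_rem_mono: "i \<le> j \<Longrightarrow> ht_remaining V E leE leV j \<subseteq> ht_remaining V E leE leV i"
proof (induction j)
  case 0
  then show ?case by simp
next
  case (Suc j)
  then show ?case using ht_row_sub
    by (metis dual_order.trans ht_remaining.simps(2) le_Suc_eq order_refl)
qed

lemma ht_cell_remove:
  assumes "linear_order_on E leE" "finite R" "R \<subseteq> E" "f \<in> ht_cell leE w R" "w \<in> f"
  shows "\<exists>g\<in>R. w \<in> g \<and> g \<notin> ht_cell leE w R \<and> (f,g) \<in> leE \<and> g \<noteq> f"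
proof -
  have fR: "f \<in> R" by (rule subsetD[OF ht_cell_sub assms(4)])
  let ?S = "{g\<in>R. w \<in> g}"
  note L = lo_facts[OF assms(1)]
  have Sfin: "finite ?S" using assms(2) by simp
  have Sne: "?S \<noteq> {}" using fR assms(5) by auto
  have SE: "?S \<subseteq> E" using assms(3) by auto
  obtain m where m0: "m \<in> ?S" "\<forall>x\<in>?S. (x,m)\<in>leE"
    using finite_max_rel[OF Sfin Sne SE L(1,2,4)] by blast
  have m: "m \<in> R" "w \<in> m" "\<forall>x\<in>R. w \<in> x \<longrightarrow> (x,m)\<in>leE" using m0 by auto
  have uniq: "(THE g. g \<in> R \<and> w \<in> g \<and> (\<forall>x\<in>R. w \<in> x \<longrightarrow> (x, g) \<in> leE)) = m"
  proof (rule the_equality)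
    show "m \<in> R \<and> w \<in> m \<and> (\<forall>x\<in>R. w \<in> x \<longrightarrow> (x, m) \<in> leE)" using m by simp
    fix g assume g: "g \<in> R \<and> w \<in> g \<and> (\<forall>x\<in>R. w \<in> x \<longrightarrow> (x, g) \<in> leE)"
    then have gm: "(g,m) \<in> leE" "(m,g) \<in> leE" using m by auto
    show "g = m" by (rule antisymD[OF L(3) gm(1,2)])
  qed
  have ex: "\<exists>f\<in>R. w \<in> f" using m by auto
  have cell: "ht_cell leE w R = R - {m}"
    by (simp only: ht_cell_def if_P[OF ex] uniq)
  have fm: "f \<noteq> m" using assms(4) cell by auto
  have "(f,m) \<in> leE" using m(3) fR assms(5) by auto
  moreover have "m \<notin> ht_cell leE w R" using cell by simp
  ultimately show ?thesis using m(1,2) fm by auto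
qed

lemma ht_row_remove:
  assumes "linear_order_on E leE" "finite R" "R \<subseteq> E" "w \<in> set vs" "f \<in> ht_row leE vs R" "w \<in> f"
  shows "\<exists>g\<in>R. w \<in> g \<and> g \<notin> ht_row leE vs R \<and> (f,g) \<in> leE \<and> g \<noteq> f"
  using assms(2-5)
proof (induction vs arbitrary: R)
  case Nil
  then show ?case by simp
next
  case (Cons v vs)
  have sub: "ht_cell leE v R \<subseteq> R" by (rule ht_cell_sub)
  show ?case
  proof (cases "w \<in> set vs")
    case True
    have "\<exists>g\<in>ht_cell leE v R. w \<in> g \<and> g \<notin> ht_row leE vs (ht_cell leE v R) \<and> (f,g) \<in> leE \<and> g \<noteq> f"
      apply (rule Cons.IH)
      using Cons.prems True sub finite_subset by auto
    then show ?thesis using sub by auto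
  next
    case False
    then have wv: "w = v" using Cons.prems by auto
    have fc: "f \<in> ht_cell leE w R" using Cons.prems wv ht_row_sub by fastforce
    obtain g where g: "g\<in>R" "w \<in> g" "g \<notin> ht_cell leE w R" "(f,g) \<in> leE" "g \<noteq> f"
      using ht_cell_remove[OF assms(1) Cons.prems(1,2) fc assms(6)] by blast
    have "g \<notin> ht_row leE (v # vs) R" using g(3) wv ht_row_sub by fastforce
    then show ?thesis using g by auto
  qed
qed

lemma cell_lemma:
  assumes og: "ordered_graph V E leE leV" and fE: "f \<in> E" and wf: "w \<in> f"
    and i: "1 \<le> i" "i < height V E leE leV f"
  shows "\<exists>g\<in>E. w \<in> g \<and> height V E leE leV g = i \<and> (f,g) \<in> leE \<and> g \<noteq> f"
proof -
  have sg: "simple_graph V E" and lo: "linear_order_on E leE"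
    using og unfolding ordered_graph_def by simp_all
  have finV: "finite V" using sg unfolding simple_graph_def by simp
  have EV: "\<forall>g\<in>E. g \<subseteq> V" using sg unfolding simple_graph_def by fastforce
  have "E \<subseteq> Pow V" using EV by auto
  then have finE: "finite E" using finV by (meson finite_Pow_iff finite_subset)
  define R where "R = ht_remaining V E leE leV (i - 1)"
  have RE: "R \<subseteq> E" unfolding R_def using ht_rem_mono[of 0 "i-1" V E leE leV] by simp
  have si: "Suc (i - 1) = i" using i(1) by simp
  have Ri: "ht_remaining V E leE leV i = ht_row leE (vlist V leV) R"
    unfolding R_def using ht_remaining.simps(2)[of V E leE leV "i - 1"] si by simp
  have fi: "f \<in> ht_remaining V E leE leV i"
    using not_less_Least[OF i(2)[unfolded height_def]] by simp
  have wV: "w \<in> set (vlist V leV)" using vlist_set[OF og] EV fE wf by auto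
  have fi': "f \<in> ht_row leE (vlist V leV) R" using fi Ri by simp
  obtain g where g: "g\<in>R" "w \<in> g" "g \<notin> ht_row leE (vlist V leV) R" "(f,g) \<in> leE" "g \<noteq> f"
    using ht_row_remove[OF lo finite_subset[OF RE finE] RE wV fi' wf] by auto
  have gi: "g \<notin> ht_remaining V E leE leV i" using g(3) Ri by simp
  have "height V E leE leV g = i"
    unfolding height_def
  proof (rule Least_equality)
    show "g \<notin> ht_remaining V E leE leV i" by (rule gi)
    fix y assume y: "g \<notin> ht_remaining V E leE leV y"
    show "i \<le> y"
    proof (rule ccontr)
      assume "\<not> i \<le> y"
      then have "y \<le> i - 1" by simp
      then have "R \<subseteq> ht_remaining V E leE leV y" unfolding R_def by (rule ht_rem_mono)
      then show False using g(1) y by auto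
    qed
  qed
  then show ?thesis using g RE by auto
qed


lemma trail_le_last:
  assumes lo: "linear_order_on E leE" and tr: "increasing_trail E leE ws"
    and g: "g \<in> set (walk_edges ws)"
  shows "(g, last (walk_edges ws)) \<in> leE"
proof -
  define es where "es = walk_edges ws"
  define L where "L = length es"
  have L1: "L \<ge> 1" using tr unfolding L_def es_def increasing_trail_def walk_edges_len by auto
  have esE: "set es \<subseteq> E" using tr unfolding es_def increasing_trail_def by auto
  have cons: "\<And>i. Suc i < L \<Longrightarrow> (es ! i, es ! Suc i) \<in> leE"
    using tr unfolding es_def L_def increasing_trail_def by auto
  have main: "\<And>d. d < L \<Longrightarrow> (es ! (L - 1 - d), es ! (L - 1)) \<in> leE"
  proof -
    fix d show "d < L \<Longrightarrow> (es ! (L - 1 - d), es ! (L - 1)) \<in> leE"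
    proof (induction d)
      case 0
      have "es ! (L - 1) \<in> E" using esE L1 unfolding L_def by (simp add: subset_code(1))
      then show ?case using lo_facts(1)[OF lo] by simp
    next
      case (Suc d)
      have "(es ! (L - 1 - Suc d), es ! Suc (L - 1 - Suc d)) \<in> leE"
        using cons Suc.prems by auto
      moreover have "Suc (L - 1 - Suc d) = L - 1 - d" using Suc.prems by auto
      ultimately show ?case using Suc lo_facts(2)[OF lo] by (auto dest: transD)
    qed
  qed
  obtain i where i: "i < L" "g = es ! i" using g unfolding es_def L_def by (metis in_set_conv_nth)
  have "(es ! (L - 1 - (L - 1 - i)), es ! (L - 1)) \<in> leE" using main[of "L - 1 - i"] i by auto
  moreover have "L - 1 - (L - 1 - i) = i" using i by auto
  moreover have "last es = es ! (L - 1)"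
  proof -
    have "es \<noteq> []" using L1 unfolding L_def by auto
    then show ?thesis unfolding L_def by (rule last_conv_nth)
  qed
  ultimately show ?thesis using i unfolding es_def by simp
qed

lemma trail_extend:
  assumes lo: "linear_order_on E leE" and tr: "increasing_trail E leE ws"
    and gE: "g \<in> E" and gdef: "g = {last ws, y}"
    and le: "(last (walk_edges ws), g) \<in> leE" and ne: "g \<noteq> last (walk_edges ws)"
  shows "increasing_trail E leE (ws @ [y])" "walk_edges (ws @ [y]) = walk_edges ws @ [g]"
proof -
  have wsne: "ws \<noteq> []" using tr unfolding increasing_trail_def by auto
  show we: "walk_edges (ws @ [y]) = walk_edges ws @ [g]" using walk_edges_snoc[OF wsne] gdef by simp
  have esne: "walk_edges ws \<noteq> []"
  proof -
    have "length ws \<ge> 2" using tr unfolding increasing_trail_def by simp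
    then have "length (walk_edges ws) \<noteq> 0" by (simp add: walk_edges_len)
    then show ?thesis by simp
  qed
  have notin: "g \<notin> set (walk_edges ws)"
  proof
    assume "g \<in> set (walk_edges ws)"
    then have "(g, last (walk_edges ws)) \<in> leE" using trail_le_last[OF lo tr] by auto
    then show False using le ne lo_facts(3)[OF lo] by (auto dest: antisymD)
  qed
  have cons: "\<forall>i. Suc i < length (walk_edges ws @ [g]) \<longrightarrow>
        ((walk_edges ws @ [g]) ! i, (walk_edges ws @ [g]) ! Suc i) \<in> leE"
  proof (intro allI impI)
    fix i assume i: "Suc i < length (walk_edges ws @ [g])"
    show "((walk_edges ws @ [g]) ! i, (walk_edges ws @ [g]) ! Suc i) \<in> leE"
    proof (cases "Suc i < length (walk_edges ws)")
      case True
      then show ?thesis using tr unfolding increasing_trail_def by (simp add: nth_append)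
    next
      case False
      then have si: "Suc i = length (walk_edges ws)" using i by simp
      then have ii: "i = length (walk_edges ws) - 1" by simp
      have "(walk_edges ws @ [g]) ! i = last (walk_edges ws)"
        using si ii esne by (simp add: nth_append last_conv_nth)
      moreover have "(walk_edges ws @ [g]) ! Suc i = g" using si by (simp add: nth_append)
      ultimately show ?thesis using le by simp
    qed
  qed
  show "increasing_trail E leE (ws @ [y])"
    unfolding increasing_trail_def we using tr gE notin cons unfolding increasing_trail_def by auto
qed

lemma walk_edges_ne: "length ws \<ge> 2 \<Longrightarrow> walk_edges ws \<noteq> []"
proof -
  assume "length ws \<ge> 2"
  then have "length (walk_edges ws) \<noteq> 0" by (simp add: walk_edges_len)
  then show ?thesis by simp
qed

lemma last_in_last_edge:
  assumes "length ws \<ge> 2"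
  shows "last ws \<in> last (walk_edges ws)"
proof -
  have "ws = butlast ws @ [last ws]" using assms by (metis append_butlast_last_id list.size(3) not_numeral_le_zero)
  moreover have "butlast ws \<noteq> []" using assms by (cases ws) auto
  ultimately have "walk_edges ws = walk_edges (butlast ws) @ [{last (butlast ws), last ws}]"
    by (metis walk_edges_snoc)
  then show ?thesis by simp
qed

lemma double_count:
  assumes "finite A" "finite W" "\<forall>g\<in>A. finite g \<and> card g \<le> 2"
    "\<forall>w\<in>W. D \<le> card {g\<in>A. w \<in> g}"
  shows "D * card W \<le> 2 * card A"
proof -
  have "D * card W = (\<Sum>w\<in>W. D)" by simp
  also have "\<dots> \<le> (\<Sum>w\<in>W. card {g\<in>A. w \<in> g})" using assms(4) by (intro sum_mono) auto
  also have "\<dots> = (\<Sum>w\<in>W. \<Sum>g\<in>A. if w \<in> g then 1 else 0)"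
    using assms(1) by (simp add: sum.inter_filter[symmetric])
  also have "\<dots> = (\<Sum>g\<in>A. \<Sum>w\<in>W. if w \<in> g then 1 else 0)" by (rule sum.swap)
  also have "\<dots> = (\<Sum>g\<in>A. card {w\<in>W. w \<in> g})"
    using assms(2) by (simp add: sum.inter_filter[symmetric])
  also have "\<dots> \<le> (\<Sum>g\<in>A. 2)"
  proof (intro sum_mono)
    fix g assume "g \<in> A"
    then have "card {w\<in>W. w \<in> g} \<le> card g" using assms(3) by (intro card_mono) auto
    then show "card {w\<in>W. w \<in> g} \<le> 2" using assms(3) \<open>g \<in> A\<close> by auto
  qed
  also have "\<dots> = 2 * card A" by simp
  finally show ?thesis .
qed


theorem lemma4p2:
  fixes V :: "'a set" and E :: "'a set set"
    and leE :: "('a set \<times> 'a set) set" and leV :: "('a \<times> 'a) set"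
    and n :: nat and h :: real and e :: "'a set"
  assumes "ordered_graph V E leE leV"
    and "card V \<le> n"
    and "h \<ge> 1"
    and "e \<in> E"
    and "real (height V E leE leV e) \<ge> 21 * h * log 2 n"
  shows "\<exists>VH EH. subgraph VH EH V E \<and> avg_degree VH EH \<ge> h \<and>
           (\<forall>f\<in>EH. \<exists>ws. increasing_trail E leE ws \<and>
               hd (walk_edges ws) = e \<and> last (walk_edges ws) = f \<and>
               real (trail_length ws) \<le> 2 + log 2 n \<and>
               (\<forall>g\<in>set (walk_edges ws).
                  real (height V E leE leV g)
                    \<ge> real (height V E leE leV e) - 7 * h * (log 2 n + 2)))"
  (is "?goal")
proof (rule ccontr)
  assume ng: "\<not> ?goal"
  note og = assms(1)
  have sg: "simple_graph V E" and lo: "linear_order_on E leE"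
    using og unfolding ordered_graph_def by simp_all
  have finV: "finite V" using sg unfolding simple_graph_def by simp
  have H: "\<forall>g\<in>E. \<exists>a b. a \<in> V \<and> b \<in> V \<and> a \<noteq> b \<and> g = {a, b}"
    using sg unfolding simple_graph_def by simp
  have E2: "\<forall>g\<in>E. \<exists>a b. a \<noteq> b \<and> g = {a, b}"
  proof
    fix g assume "g \<in> E"
    then obtain a b where "a \<noteq> b" "g = {a, b}" using H by meson
    then show "\<exists>a b. a \<noteq> b \<and> g = {a, b}" by (intro exI conjI)
  qed
  have EV: "\<forall>g\<in>E. g \<subseteq> V"
  proof
    fix g assume "g \<in> E"
    then obtain a b where "a \<in> V" "b \<in> V" "g = {a, b}" using H by meson
    then show "g \<subseteq> V" by simp
  qed
  have "E \<subseteq> Pow V" using EV by auto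
  then have finE: "finite E" using finV by (simp add: finite_subset)
  have Ecard: "\<forall>g\<in>E. finite g \<and> card g \<le> 2"
  proof
    fix g assume "g \<in> E"
    then obtain a b where "a \<noteq> b" "g = {a, b}" using E2 by meson
    then show "finite g \<and> card g \<le> 2" by simp
  qed
  obtain u v where uv: "u \<noteq> v" "e = {u, v}" using E2 assms(4) by meson
  have "card {u,v} \<le> card V" using EV assms(4) uv finV by (intro card_mono) auto
  then have n2: "n \<ge> 2" using uv assms(2) by auto
  define L where "L = log 2 n"
  have L1: "L \<ge> 1" unfolding L_def using n2 by simp
  define hg where "hg = height V E leE leV"
  define k where "k = hg e"
  define D where "D = nat \<lceil>3 * h\<rceil>"
  have D3: "real D \<ge> 3 * h" unfolding D_def by linarith
  have D4: "real D \<le> 4 * h" unfolding D_def using assms(3) by linarith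
  have D1: "D \<ge> 1" using D3 assms(3) by linarith
  have kbig: "real k \<ge> 21 * h * L" using assms(5) unfolding k_def hg_def L_def by simp
  define good where "good s ws \<longleftrightarrow> increasing_trail E leE ws \<and> hd (walk_edges ws) = e \<and>
      trail_length ws = Suc s \<and> (\<forall>g\<in>set (walk_edges ws). int (hg g) \<ge> int k - int s * int D)" for s ws
  define W where "W s = last ` {ws. good s ws}" for s
  define A where "A s = {g\<in>E. \<exists>ws. good s ws \<and> last ws \<in> g \<and> (last (walk_edges ws), g) \<in> leE \<and>
      g \<noteq> last (walk_edges ws) \<and> int (hg g) \<ge> int k - int (Suc s) * int D}" for s
  have goodlen: "length ws \<ge> 2" if "good s ws" for s ws
    using that unfolding good_def increasing_trail_def by auto
  have goodlast: "last (walk_edges ws) \<in> E" if "good s ws" for s ws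
  proof -
    have "walk_edges ws \<noteq> []" using goodlen[OF that] by (rule walk_edges_ne)
    then show ?thesis using that unfolding good_def increasing_trail_def by auto
  qed
  have WV: "W s \<subseteq> V" for s
  proof
    fix w assume "w \<in> W s"
    then obtain ws where gw: "good s ws" "w = last ws" unfolding W_def by auto
    have "w \<in> last (walk_edges ws)" unfolding gw(2) by (rule last_in_last_edge[OF goodlen[OF gw(1)]])
    moreover have "last (walk_edges ws) \<subseteq> V" using goodlast[OF \<open>good s ws\<close>] EV by simp
    ultimately show "w \<in> V" by (rule subsetD[rotated])
  qed
  have finW: "finite (W s)" for s using finite_subset[OF WV finV] .
  have finA: "finite (A s)" for s using finE unfolding A_def by auto
  have A_ext: "\<exists>ws y. good s ws \<and> g = {last ws, y} \<and> good (Suc s) (ws @ [y]) \<and>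
        last (walk_edges (ws @ [y])) = g" if gA: "g \<in> A s" for s g
  proof -
    obtain ws where ws: "good s ws" "last ws \<in> g" "(last (walk_edges ws), g) \<in> leE"
      "g \<noteq> last (walk_edges ws)" "int (hg g) \<ge> int k - int (Suc s) * int D" and gE: "g \<in> E"
      using gA unfolding A_def by blast
    have "\<exists>y. g = {last ws, y}"
    proof -
      obtain a b where ab: "g = {a, b}" using E2 gE by meson
      then have "last ws = a \<or> last ws = b" using ws(2) by simp
      then show ?thesis
      proof
        assume "last ws = a" then show ?thesis using ab by auto
      next
        assume "last ws = b" then have "g = {last ws, a}" using ab by (simp add: insert_commute)
        then show ?thesis by (rule exI)
      qed
    qed
    then obtain y where y: "g = {last ws, y}" by (elim exE)
    have tr: "increasing_trail E leE ws" using ws(1) unfolding good_def by simp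
    note ext = trail_extend[OF lo tr gE y ws(3,4)]
    have ne: "walk_edges ws \<noteq> []" using goodlen[OF ws(1)] by (rule walk_edges_ne)
    have "good (Suc s) (ws @ [y])"
      unfolding good_def
    proof (intro conjI)
      show "increasing_trail E leE (ws @ [y])" by (rule ext(1))
      show "hd (walk_edges (ws @ [y])) = e" using ext(2) ne ws(1) unfolding good_def by simp
      show "trail_length (ws @ [y]) = Suc (Suc s)" using ext(2) ws(1) unfolding good_def trail_length_def by simp
      show "\<forall>g\<in>set (walk_edges (ws @ [y])). int k - int (Suc s) * int D \<le> int (hg g)"
      proof
        fix g' assume "g' \<in> set (walk_edges (ws @ [y]))"
        then have "g' \<in> set (walk_edges ws) \<or> g' = g" using ext(2) by auto
        then show "int k - int (Suc s) * int D \<le> int (hg g')"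
        proof
          assume "g' \<in> set (walk_edges ws)"
          then have "int (hg g') \<ge> int k - int s * int D" using ws(1) unfolding good_def by auto
          then show ?thesis by (simp add: algebra_simps)
        next
          assume "g' = g" then show ?thesis using ws(5) by simp
        qed
      qed
    qed
    then show ?thesis
      apply (intro exI[of _ ws] exI[of _ y])
      using ws(1) y ext(2) by simp
  qed
  have AE: "A s \<subseteq> E" for s unfolding A_def by auto
  have AW: "\<Union>(A s) \<subseteq> W s \<union> W (Suc s)" for s
  proof
    fix x assume "x \<in> \<Union>(A s)"
    then obtain g where g: "g \<in> A s" "x \<in> g" by auto
    obtain ws y where wy: "good s ws" "g = {last ws, y}" "good (Suc s) (ws @ [y])"
      using A_ext[OF g(1)] by blast
    have "last ws \<in> W s" unfolding W_def using wy(1) by auto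
    moreover have "y \<in> W (Suc s)" unfolding W_def using wy(3) by force
    ultimately show "x \<in> W s \<union> W (Suc s)" using g(2) wy(2) by auto
  qed
  have A_ok: "\<exists>ws. increasing_trail E leE ws \<and>
               hd (walk_edges ws) = e \<and> last (walk_edges ws) = f \<and>
               real (trail_length ws) \<le> 2 + log 2 n \<and>
               (\<forall>g\<in>set (walk_edges ws).
                  real (height V E leE leV g)
                    \<ge> real (height V E leE leV e) - 7 * h * (log 2 n + 2))"
    if sL: "real s \<le> L" and fA: "f \<in> A s" for s f
  proof -
    obtain ws y where wy: "good (Suc s) (ws @ [y])" "last (walk_edges (ws @ [y])) = f"
      using A_ext[OF fA] by blast
    have bound: "real (Suc s) * real D \<le> 7 * h * (L + 2)"
    proof -
      have "real (Suc s) * real D \<le> (L + 1) * (4 * h)"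
        using sL D4 by (intro mult_mono) auto
      also have "\<dots> \<le> 7 * h * (L + 2)" using L1 assms(3) by (simp add: algebra_simps)
      finally show ?thesis .
    qed
    show ?thesis
    proof (intro exI conjI)
      show "increasing_trail E leE (ws @ [y])" "hd (walk_edges (ws @ [y])) = e"
        using wy(1) unfolding good_def by auto
      show "last (walk_edges (ws @ [y])) = f" by (rule wy(2))
      show "real (trail_length (ws @ [y])) \<le> 2 + log 2 n"
        using wy(1) sL unfolding good_def L_def by simp
      show "\<forall>g\<in>set (walk_edges (ws @ [y])). real (height V E leE leV e) - 7 * h * (log 2 n + 2)
          \<le> real (height V E leE leV g)"
      proof
        fix g assume "g \<in> set (walk_edges (ws @ [y]))"
        then have "int (hg g) \<ge> int k - int (Suc s) * int D" using wy(1) unfolding good_def by auto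
        then have "real (hg g) \<ge> real k - real (Suc s) * real D"
          by (metis (mono_tags, opaque_lifting) of_int_le_iff of_int_diff of_int_mult of_int_of_nat_eq)
        then show "real (height V E leE leV e) - 7 * h * (log 2 n + 2) \<le> real (height V E leE leV g)"
          using bound unfolding hg_def k_def L_def by linarith
      qed
    qed
  qed
  have deg: "D \<le> card {g\<in>A s. w \<in> g}" if sL: "real s \<le> L" and wW: "w \<in> W s" for s w
  proof -
    obtain ws where ws: "good s ws" "w = last ws" using wW unfolding W_def by auto
    define f where "f = last (walk_edges ws)"
    have fE: "f \<in> E" unfolding f_def using goodlast[OF ws(1)] .
    have wf: "w \<in> f" unfolding f_def ws(2) using last_in_last_edge goodlen[OF ws(1)] by blast
    have ne: "walk_edges ws \<noteq> []" using goodlen[OF ws(1)] by (rule walk_edges_ne)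
    have hf: "int (hg f) \<ge> int k - int s * int D" using ws(1) ne unfolding good_def f_def by auto
    have kb: "real k \<ge> real (Suc s) * real D + 1"
    proof -
      have "real (Suc s) * real D \<le> (L + 1) * (4 * h)"
        using sL D4 by (intro mult_mono) auto
      moreover have "(L + 1) * (4 * h) + 1 \<le> 21 * h * L"
      proof -
        have hL: "h \<le> h * L" using mult_left_mono[OF L1, of h] assms(3) by simp
        have e1: "(L + 1) * (4 * h) + 1 = 4*(h*L) + 4*h + 1" by (simp add: algebra_simps)
        have e2: "21 * h * L = 21*(h*L)" by simp
        show ?thesis unfolding e1 e2 using hL assms(3) by linarith
      qed
      ultimately show ?thesis using kbig by linarith
    qed
    then have kbi: "int k \<ge> int (Suc s) * int D + 1"
      by (metis (mono_tags, opaque_lifting) of_int_le_iff of_int_add of_int_mult of_int_of_nat_eq of_int_1)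
    define I where "I = {hg f - D ..< hg f}"
    have Ibd: "\<And>i. i \<in> I \<Longrightarrow> 1 \<le> i \<and> i < height V E leE leV f \<and> int i \<ge> int k - int (Suc s) * int D"
      using hf kbi unfolding I_def hg_def by (auto simp: algebra_simps)
    have "\<forall>i\<in>I. \<exists>g. g\<in>E \<and> w \<in> g \<and> hg g = i \<and> (f,g) \<in> leE \<and> g \<noteq> f"
    proof
      fix i assume "i \<in> I"
      then show "\<exists>g. g\<in>E \<and> w \<in> g \<and> hg g = i \<and> (f,g) \<in> leE \<and> g \<noteq> f"
        using cell_lemma[OF og fE wf] Ibd unfolding hg_def by meson
    qed
    note ex = this
    define G where "G i = (SOME g. g\<in>E \<and> w \<in> g \<and> hg g = i \<and> (f,g) \<in> leE \<and> g \<noteq> f)" for i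
    have G: "\<forall>i\<in>I. G i \<in> E \<and> w \<in> G i \<and> hg (G i) = i \<and> (f, G i) \<in> leE \<and> G i \<noteq> f"
    proof
      fix i assume "i \<in> I"
      then have "\<exists>g. g\<in>E \<and> w \<in> g \<and> hg g = i \<and> (f,g) \<in> leE \<and> g \<noteq> f" using ex by simp
      then show "G i \<in> E \<and> w \<in> G i \<and> hg (G i) = i \<and> (f, G i) \<in> leE \<and> G i \<noteq> f"
        unfolding G_def by (rule someI_ex)
    qed
    have s1: "G ` I \<subseteq> {g\<in>A s. w \<in> g}"
    proof
      fix g assume "g \<in> G ` I"
      then obtain i where i: "i \<in> I" "g = G i" by auto
      have Gi: "G i \<in> E" "w \<in> G i" "hg (G i) = i" "(f, G i) \<in> leE" "G i \<noteq> f"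
        using bspec[OF G i(1)] by simp_all
      have ib: "int i \<ge> int k - int (Suc s) * int D" using Ibd[OF i(1)] by simp
      have P: "good s ws \<and> last ws \<in> G i \<and> (last (walk_edges ws), G i) \<in> leE \<and>
          G i \<noteq> last (walk_edges ws) \<and> int (hg (G i)) \<ge> int k - int (Suc s) * int D"
        using ws(1) Gi(2,4,5) ib Gi(3) unfolding ws(2)[symmetric] f_def[symmetric] by simp
      have "\<exists>ws'. good s ws' \<and> last ws' \<in> G i \<and> (last (walk_edges ws'), G i) \<in> leE \<and>
          G i \<noteq> last (walk_edges ws') \<and> int (hg (G i)) \<ge> int k - int (Suc s) * int D"
        by (rule exI[of _ ws]) (rule P)
      then have "G i \<in> A s" unfolding A_def mem_Collect_eq using Gi(1) by (rule conjI[rotated])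
      then show "g \<in> {g\<in>A s. w \<in> g}" using Gi(2) i(2) by simp
    qed
    have s2: "inj_on G I"
    proof (rule inj_onI)
      fix i j assume ij: "i \<in> I" "j \<in> I" "G i = G j"
      have "i = hg (G i)" using bspec[OF G ij(1)] by simp
      also have "\<dots> = hg (G j)" using ij(3) by (rule arg_cong)
      also have "\<dots> = j" using bspec[OF G ij(2)] by simp
      finally show "i = j" .
    qed
    have "card I \<le> card {g\<in>A s. w \<in> g}"
    proof -
      have "card I = card (G ` I)" using card_image[OF s2] by simp
      also have "\<dots> \<le> card {g\<in>A s. w \<in> g}" using s1 finA by (intro card_mono) auto
      finally show ?thesis .
    qed
    moreover have "card I = D"
    proof -
      have kbi': "int k \<ge> int s * int D + int D + 1" using kbi by (simp add: algebra_simps)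
      have "int (hg f) \<ge> int D + 1" using hf kbi' by linarith
      then have "D \<le> hg f" by simp
      then show ?thesis unfolding I_def by simp
    qed
    ultimately show ?thesis by simp
  qed
  have growth: "2 * card (W s) < card (W (Suc s))" if sL: "real s \<le> L" and Wne: "W s \<noteq> {}" for s
  proof -
    define VH where "VH = \<Union>(A s)"
    have sub: "subgraph VH (A s) V E"
    proof -
      have "\<Union>(A s) \<subseteq> V" using AE EV by auto
      moreover have "\<forall>f\<in>A s. f \<subseteq> \<Union>(A s)" by auto
      ultimately show ?thesis unfolding subgraph_def VH_def using AE by simp
    qed
    have nd: "\<not> avg_degree VH (A s) \<ge> h"
    proof
      assume av: "avg_degree VH (A s) \<ge> h"
      have all: "\<forall>f\<in>A s. \<exists>ws. increasing_trail E leE ws \<and>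
               hd (walk_edges ws) = e \<and> last (walk_edges ws) = f \<and>
               real (trail_length ws) \<le> 2 + log 2 n \<and>
               (\<forall>g\<in>set (walk_edges ws).
                  real (height V E leE leV g)
                    \<ge> real (height V E leE leV e) - 7 * h * (log 2 n + 2))"
      proof
        fix f assume "f \<in> A s"
        then show "\<exists>ws. increasing_trail E leE ws \<and>
               hd (walk_edges ws) = e \<and> last (walk_edges ws) = f \<and>
               real (trail_length ws) \<le> 2 + log 2 n \<and>
               (\<forall>g\<in>set (walk_edges ws).
                  real (height V E leE leV g)
                    \<ge> real (height V E leE leV e) - 7 * h * (log 2 n + 2))"
          by (rule A_ok[OF sL])
      qed
      have "?goal"
        apply (rule exI[of _ VH], rule exI[of _ "A s"])
        using sub av all by (intro conjI)
      then show False using ng by simp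
    qed
    obtain w where w: "w \<in> W s" using Wne by auto
    have "card {g\<in>A s. w \<in> g} \<ge> 1" using deg[OF sL w] D1 by simp
    then have "{g\<in>A s. w \<in> g} \<noteq> {}" by (metis card.empty not_one_le_zero)
    then obtain g where "g \<in> A s" "w \<in> g" by auto
    then have "VH \<noteq> {}" unfolding VH_def by auto
    moreover have finVH: "finite VH" unfolding VH_def
      by (rule finite_subset[OF AW]) (simp add: finW)
    ultimately have cVH: "card VH > 0" by (simp add: card_gt_0_iff)
    have lt: "2 * real (card (A s)) < h * real (card VH)"
      using nd cVH unfolding avg_degree_def by (simp add: field_simps)
    have cnt: "D * card (W s) \<le> 2 * card (A s)"
    proof -
      have c1: "\<forall>g\<in>A s. finite g \<and> card g \<le> 2" using Ecard AE by auto
      have c2: "\<forall>w\<in>W s. D \<le> card {g\<in>A s. w \<in> g}"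
      proof
        fix w assume "w \<in> W s" then show "D \<le> card {g\<in>A s. w \<in> g}" by (rule deg[OF sL])
      qed
      show ?thesis by (rule double_count[OF finA finW c1 c2])
    qed
    have "card VH \<le> card (W s \<union> W (Suc s))"
      using AW finW unfolding VH_def by (intro card_mono) auto
    also have "\<dots> \<le> card (W s) + card (W (Suc s))" by (rule card_Un_le)
    finally have cV: "real (card VH) \<le> real (card (W s)) + real (card (W (Suc s)))" by linarith
    have "3 * h * real (card (W s)) \<le> real D * real (card (W s))"
      using D3 by (intro mult_right_mono) auto
    also have "\<dots> \<le> 2 * real (card (A s))"
    proof -
      have "real (D * card (W s)) \<le> real (2 * card (A s))" using cnt by (simp only: of_nat_le_iff)
      then show ?thesis by simp
    qed
    also have "\<dots> < h * real (card VH)" by (rule lt)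
    also have "\<dots> \<le> h * (real (card (W s)) + real (card (W (Suc s))))"
      using cV assms(3) by (intro mult_left_mono) auto
    finally have fin: "3 * h * real (card (W s)) < h * (real (card (W s)) + real (card (W (Suc s))))" .
    have q1: "3 * h * real (card (W s)) = 3 * (h * real (card (W s)))" by simp
    have q2: "h * (real (card (W s)) + real (card (W (Suc s)))) = h * real (card (W s)) + h * real (card (W (Suc s)))"
      by (simp add: distrib_left)
    have q3: "h * (2 * real (card (W s))) = 2 * (h * real (card (W s)))" by simp
    have "h * (2 * real (card (W s))) < h * real (card (W (Suc s)))"
      using fin unfolding q1 q2 q3 by linarith
    then have "2 * real (card (W s)) < real (card (W (Suc s)))"
    proof -
      have h0: "0 \<le> h" using assms(3) by simp
      show ?thesis using \<open>h * (2 * real (card (W s))) < h * real (card (W (Suc s)))\<close> h0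
        by (rule mult_left_less_imp_less)
    qed
    then show ?thesis by linarith
  qed
  define T where "T = nat \<lfloor>L\<rfloor>"
  have TL: "real T \<le> L" "L < real T + 1" unfolding T_def using L1 by linarith+
  have base: "2 \<le> card (W 0)"
  proof -
    have vu: "{v, u} = e" using uv(2) by (simp only: insert_commute)
    have we1: "walk_edges [u, v] = [e]" "walk_edges [v, u] = [e]"
      unfolding walk_edges_def using uv(2) vu by simp_all
    have g1: "good 0 [u, v]" and g2: "good 0 [v, u]"
      unfolding good_def increasing_trail_def trail_length_def k_def we1 using assms(4) by simp_all
    have "last [u, v] \<in> W 0" unfolding W_def using g1 by (intro imageI) simp
    moreover have "last [v, u] \<in> W 0" unfolding W_def using g2 by (intro imageI) simp
    ultimately have sub: "{u, v} \<subseteq> W 0" by simp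
    have "card {u, v} = 2" using uv by simp
    then show ?thesis using card_mono[OF finW sub] by simp
  qed
  have grow: "s \<le> T \<Longrightarrow> 2 ^ Suc s \<le> card (W s)" for s
  proof (induction s)
    case 0
    then show ?case using base by simp
  next
    case (Suc s)
    then have "real s \<le> L" using TL by linarith
    moreover have "W s \<noteq> {}"
    proof
      assume "W s = {}"
      moreover have "2 ^ Suc s \<le> card (W s)" using Suc by simp
      ultimately show False by simp
    qed
    ultimately have "2 * card (W s) < card (W (Suc s))" by (rule growth)
    then show ?case using Suc by simp
  qed
  have "2 ^ Suc T \<le> card (W T)" using grow by simp
  also have "\<dots> \<le> card V" using WV finV by (intro card_mono) auto
  also have "\<dots> \<le> n" by (rule assms(2))
  finally have "real (Suc T) \<le> log 2 n" by (rule le_log2_of_power)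
  then show False using TL unfolding L_def by simp
qed

end
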